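(* The two-dimensional subalgebras of ${\rm A}_4$ are exactly $\langle e_1,e_2\rangle$, $\langle e_1\pm\mathrm{i}e_3,e_2\rangle$, $\langle e_1-e_2,e_3\rangle$ and $\langle e_1,\pm\mathrm{i}e_2+e_3\rangle$. Up to automorphisms of ${\rm A}_4$, every two-dimensional subalgebra is equivalent to one of $\langle e_1,e_2\rangle$, $\langle e_1+\mathrm{i}e_3,e_2\rangle$, $\langle e_1-e_2,e_3\rangle$, $\langle e_1,\mathrm{i}e_2+e_3\rangle$.
   Context: ${\rm A}_4$ is the complex algebra with basis $e_1,e_2,e_3$, unit $e_1$ ($e_1e_i=e_ie_1=e_i$), $e_2e_2=e_2$ and $e_3e_3=-e_1+e_2$; all other products of basis elements are zero. $\mathrm{i}=\sqrt{-1}$. A subalgebra is a linear subspace closed under multiplication (it need not contain $e_1$). Equivalence up to automorphisms means one is mapped onto the other by an algebra automorphism. $\langle S\rangle$ denotes linear span. *)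

theory Defs
  imports "HOL-Analysis.Analysis"
begin

text \<open>The algebra A4: elements are coordinate triples (a1,a2,a3) standing for
  a1 e1 + a2 e2 + a3 e3 over the complex numbers.\<close>

type_synonym A4 = "complex \<times> complex \<times> complex"

definition sc :: "complex \<Rightarrow> A4 \<Rightarrow> A4" where
  "sc c x = (c * fst x, c * fst (snd x), c * snd (snd x))"

definition e1 :: A4 where "e1 = (1, 0, 0)"
definition e2 :: A4 where "e2 = (0, 1, 0)"
definition e3 :: A4 where "e3 = (0, 0, 1)"

text \<open>Bilinear extension of: e1 unit, e2 e2 = e2, e3 e3 = -e1 + e2, other products 0.\<close>
definition mulA4 :: "A4 \<Rightarrow> A4 \<Rightarrow> A4" where
  "mulA4 x y = (case x of (a1, a2, a3) \<Rightarrow> case y of (b1, b2, b3) \<Rightarrow>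
     (a1 * b1 - a3 * b3,
      a1 * b2 + a2 * b1 + a2 * b2 + a3 * b3,
      a1 * b3 + a3 * b1))"

definition subalgebraA4 :: "A4 set \<Rightarrow> bool" where
  "subalgebraA4 V \<longleftrightarrow> module.subspace sc V \<and> (\<forall>x\<in>V. \<forall>y\<in>V. mulA4 x y \<in> V)"

definition automorphismA4 :: "(A4 \<Rightarrow> A4) \<Rightarrow> bool" where
  "automorphismA4 f \<longleftrightarrow> Vector_Spaces.linear sc sc f \<and> bij f \<and>
     (\<forall>x y. f (mulA4 x y) = mulA4 (f x) (f y))"

definition spanA4 :: "A4 set \<Rightarrow> A4 set" where
  "spanA4 S = module.span sc S"

definition dimA4 :: "A4 set \<Rightarrow> nat" where
  "dimA4 V = vector_space.dim sc V"

end

theory Submission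
  imports Defs
begin


lemma vs: "vector_space sc"
  by unfold_locales (auto simp: sc_def algebra_simps)

lemma A4_eq: "(x::A4) = y \<longleftrightarrow> fst x = fst y \<and> fst (snd x) = fst (snd y) \<and> snd (snd x) = snd (snd y)"
  by (cases x; cases y) auto

interpretation VS: vector_space sc by (rule vs)

lemma span2: "VS.span {a,b} = {sc \<alpha> a + sc \<beta> b | \<alpha> \<beta>. True}"
  unfolding VS.span_insert VS.span_singleton
  by (auto simp: algebra_simps)

lemma span3: "VS.span {e1,e2,e3} = UNIV"
proof -
  { fix x :: A4
    obtain a b c where x: "x = (a,b,c)" by (cases x) auto
    have "x = sc a e1 + sc b e2 + sc c e3" by (simp add: x sc_def e1_def e2_def e3_def)
    also have "\<dots> \<in> VS.span {e1,e2,e3}"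
      by (intro VS.span_add VS.span_scale VS.span_base) auto
    finally have "x \<in> VS.span {e1,e2,e3}" . }
  then show ?thesis by auto
qed

lemma ind3: "VS.independent {e1,e2,e3}"
  unfolding VS.independent_insert span2 VS.span_singleton
  by (auto simp: e1_def e2_def e3_def sc_def zero_prod_def VS.independent_empty)

interpretation FD: finite_dimensional_vector_space sc "{e1,e2,e3}"
  by unfold_locales (auto simp: ind3 span3)


definition uc :: "nat \<Rightarrow> A4 \<Rightarrow> complex" where
  "uc k x = (if k = 1 then fst x + fst (snd x) else if k = 2 then fst x - \<i> * snd (snd x)
            else fst x + \<i> * snd (snd x))"

lemma uc_mul[simp]: "uc k (mulA4 x y) = uc k x * uc k y"
  by (cases x; cases y) (auto simp: uc_def mulA4_def algebra_simps)

lemma uc_add[simp]: "uc k (x + y) = uc k x + uc k y"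
  by (cases x; cases y) (auto simp: uc_def algebra_simps)

lemma uc_diff[simp]: "uc k (x - y) = uc k x - uc k y"
  by (cases x; cases y) (auto simp: uc_def algebra_simps)

lemma uc_sc[simp]: "uc k (sc c x) = c * uc k x"
  by (cases x) (auto simp: uc_def sc_def algebra_simps)

lemma uc_zero[simp]: "uc k 0 = 0"
  by (auto simp: uc_def zero_prod_def)

lemma eq_uc: "(x::A4) = y \<longleftrightarrow> (\<forall>k\<in>{1,2,3}. uc k x = uc k y)"
proof
  assume h: "\<forall>k\<in>{1,2,3}. uc k x = uc k y"
  obtain a b c where x: "x = (a,b,c)" by (cases x) auto
  obtain a' b' c' where y: "y = (a',b',c')" by (cases y) auto
  have 1: "a + b = a' + b'" and 2: "a - \<i> * c = a' - \<i> * c'" and 3: "a + \<i> * c = a' + \<i> * c'"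
    using h by (auto simp: uc_def x y)
  have "(a - \<i> * c) + (a + \<i> * c) = (a' - \<i> * c') + (a' + \<i> * c')" using 2 3 by simp
  then have "a = a'" by simp
  moreover have "(a + \<i> * c) - (a - \<i> * c) = (a' + \<i> * c') - (a' - \<i> * c')" using 2 3 by simp
  then have "c = c'" by simp
  ultimately show "x = y" using 1 x y by auto
qed auto


lemma sub_mul: "subalgebraA4 V \<Longrightarrow> x \<in> V \<Longrightarrow> y \<in> V \<Longrightarrow> mulA4 x y \<in> V"
  unfolding subalgebraA4_def by blast
lemma sub_add: "subalgebraA4 V \<Longrightarrow> x \<in> V \<Longrightarrow> y \<in> V \<Longrightarrow> x + y \<in> V"
  unfolding subalgebraA4_def by (blast intro: VS.subspace_add)
lemma sub_diff: "subalgebraA4 V \<Longrightarrow> x \<in> V \<Longrightarrow> y \<in> V \<Longrightarrow> x - y \<in> V"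
  unfolding subalgebraA4_def by (blast intro: VS.subspace_diff)
lemma sub_sc: "subalgebraA4 V \<Longrightarrow> x \<in> V \<Longrightarrow> sc c x \<in> V"
  unfolding subalgebraA4_def by (blast intro: VS.subspace_scale)

lemma idem_exists:
  assumes V: "subalgebraA4 V" and x: "x \<in> V" and j: "uc j x \<noteq> 0"
  shows "\<exists>p\<in>V. \<forall>k. uc k p = (if uc k x = uc j x then 1 else 0)"
proof -
  define m where "m l z = mulA4 z x - sc l z" for l z
  have mV: "m l z \<in> V" if "z \<in> V" for l z
    unfolding m_def using V that x by (intro sub_diff sub_mul sub_sc)
  define f where "f k' z = (if uc k' x = uc j x then z else m (uc k' x) z)" for k' z
  have fV: "f k' z \<in> V" if "z \<in> V" for k' z using mV that by (simp add: f_def)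
  define h where "h k k' = (if uc k' x = uc j x then 1 else uc k x - uc k' x)" for k k'
  have ucf: "uc k (f k' z) = uc k z * h k k'" for k k' z
    by (simp add: f_def h_def m_def algebra_simps)
  define z where "z = f 3 (f 2 (f 1 x))"
  have zV: "z \<in> V" unfolding z_def using fV x by simp
  have ucz: "uc k z = uc k x * h k 1 * h k 2 * h k 3" for k
    by (simp add: z_def ucf)
  define c where "c = uc j x * h j 1 * h j 2 * h j 3"
  have c0: "c \<noteq> 0" using j by (simp add: c_def h_def)
  have "\<forall>k. uc k (sc (1/c) z) = (if uc k x = uc j x then 1 else 0)"
  proof
    fix k
    show "uc k (sc (1/c) z) = (if uc k x = uc j x then 1 else 0)"
    proof (cases "uc k x = uc j x")
      case True
      then have "h k k' = h j k'" for k' by (simp add: h_def)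
      then have "uc k z = c" using True by (simp add: ucz c_def)
      then show ?thesis using True c0 by simp
    next
      case False
      then have "h k k = 0" by (simp add: h_def)
      moreover have "k = 1 \<or> k = 2 \<or> k = 3 \<or> uc k x = uc 3 x"
        by (auto simp: uc_def)
      ultimately have "uc k z = 0" using False by (auto simp: ucz h_def)
      then show ?thesis using False by simp
    qed
  qed
  then show ?thesis using sub_sc[OF V zV, of "1/c"] by blast
qed

definition ispat :: "A4 \<Rightarrow> bool" where "ispat p \<longleftrightarrow> (\<forall>k. uc k p = 0 \<or> uc k p = 1)"

lemma nonzero_uc: "x \<noteq> 0 \<Longrightarrow> \<exists>j. uc j x \<noteq> 0"
  using eq_uc[of x 0] by auto

lemma L1:
  assumes V: "subalgebraA4 V" and x: "x \<in> V" "x \<noteq> 0"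
  shows "(\<exists>p\<in>V. \<exists>q\<in>V. ispat p \<and> ispat q \<and> p \<noteq> 0 \<and> q \<noteq> 0 \<and> p \<noteq> q) \<or>
         (\<exists>p\<in>V. ispat p \<and> p \<noteq> 0 \<and> (\<exists>c. x = sc c p))"
proof -
  obtain j where j: "uc j x \<noteq> 0" using nonzero_uc x by blast
  obtain p where p: "p \<in> V" "\<forall>k. uc k p = (if uc k x = uc j x then 1 else 0)"
    using idem_exists[OF V x(1) j] by blast
  have pj: "uc j p = 1" using p(2) by simp
  have pp: "ispat p" "p \<noteq> 0" using p(2) pj unfolding ispat_def by (simp, force)
  show ?thesis
  proof (cases "\<forall>k. uc k x = uc j x * uc k p")
    case True
    have "x = sc (uc j x) p" by (subst eq_uc, simp only: uc_sc, use True in blast)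
    then show ?thesis using p pp by blast
  next
    case False
    then obtain k where k: "uc k x \<noteq> uc j x * uc k p" by blast
    then have k1: "uc k x \<noteq> uc j x" "uc k p = 0" using p(2) by (auto split: if_splits)
    then have k2: "uc k x \<noteq> 0" using k by auto
    obtain q where q: "q \<in> V" "\<forall>l. uc l q = (if uc l x = uc k x then 1 else 0)"
      using idem_exists[OF V x(1) k2] by blast
    have qk: "uc k q = 1" using q(2) by simp
    have qq: "ispat q" "q \<noteq> 0" using q(2) qk unfolding ispat_def by (simp, force)
    have "p \<noteq> q" using k1 qk by force
    then show ?thesis using p pp q qq by blast
  qed
qed


lemma C1:
  assumes V: "subalgebraA4 V" and d: "dimA4 V = 2"
  shows "\<exists>p\<in>V. \<exists>q\<in>V. ispat p \<and> ispat q \<and> p \<noteq> 0 \<and> q \<noteq> 0 \<and> p \<noteq> q"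
proof -
  obtain B where B: "B \<subseteq> V" "VS.independent B" "card B = 2"
    using VS.basis_exists[of V] d unfolding dimA4_def by metis
  then obtain x y where xy: "B = {x,y}" "x \<noteq> y" by (auto simp: card_2_iff)
  have x0: "x \<noteq> 0" and y0: "y \<noteq> 0" using B(2) xy VS.dependent_zero by auto
  have xs: "x \<notin> VS.span {y}" using B(2) xy VS.independent_insert by auto
  have xV: "x \<in> V" and yV: "y \<in> V" using B xy by auto
  show ?thesis
  proof (rule ccontr)
    assume nc: "\<not> ?thesis"
    have nc': "p = q" if "p \<in> V" "q \<in> V" "ispat p" "ispat q" "p \<noteq> 0" "q \<noteq> 0" for p q
      using nc that by blast
    have h1: "\<exists>p\<in>V. ispat p \<and> p \<noteq> 0 \<and> (\<exists>c. x = sc c p)"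
      using L1[OF V xV x0] nc by (elim disjE) (erule notE, assumption)+
    have h2: "\<exists>p\<in>V. ispat p \<and> p \<noteq> 0 \<and> (\<exists>c. y = sc c p)"
      using L1[OF V yV y0] nc by (elim disjE) (erule notE, assumption)+
    obtain p c where p: "p \<in> V" "ispat p" "p \<noteq> 0" "x = sc c p" using h1 by blast
    obtain q d where q: "q \<in> V" "ispat q" "q \<noteq> 0" "y = sc d q" using h2 by blast
    have "p = q" using nc' p q by blast
    have d0: "d \<noteq> 0" using y0 q(4) by (auto simp: sc_def zero_prod_def)
    have "x = sc (c / d) y" using p(4) q(4) \<open>p = q\<close> d0 by (simp add: sc_def)
    then have "x \<in> VS.span {y}" unfolding VS.span_singleton by blast
    then show False using xs by blast
  qed
qed

lemma pat_sq: "ispat p \<Longrightarrow> mulA4 p p = p"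
  unfolding ispat_def eq_uc
proof (intro ballI)
  fix k assume "\<forall>k. uc k p = 0 \<or> uc k p = 1"
  then have "uc k p = 0 \<or> uc k p = 1" by blast
  then show "uc k (mulA4 p p) = uc k p" by (elim disjE) simp_all
qed

lemma C2:
  assumes V: "subalgebraA4 V" and pq: "p \<in> V" "q \<in> V" "ispat p" "ispat q" "p \<noteq> 0" "q \<noteq> 0" "p \<noteq> q"
  shows "\<exists>p\<in>V. \<exists>q\<in>V. ispat p \<and> ispat q \<and> p \<noteq> 0 \<and> q \<noteq> 0 \<and> mulA4 p q = 0"
proof -
  define r where "r = mulA4 p q"
  have rV: "r \<in> V" unfolding r_def using V pq by (intro sub_mul)
  have pr: "uc k p = 0 \<or> uc k p = 1" "uc k q = 0 \<or> uc k q = 1" for k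
    using pq unfolding ispat_def by auto
  have ucr: "uc k r = uc k p * uc k q" for k by (simp add: r_def)
  have rp: "ispat r" unfolding ispat_def
  proof
    fix k show "uc k r = 0 \<or> uc k r = 1" using pr[of k] ucr[of k] by auto
  qed
  show ?thesis
  proof (cases "r = 0")
    case True
    then have "mulA4 p q = 0" using r_def by simp
    then show ?thesis using pq by blast
  next
    case False
    show ?thesis
    proof (cases "r = p")
      case True
      have ck: "uc k p * uc k q = uc k p" for k using True ucr by metis
      have "q - p \<in> V" using V pq by (intro sub_diff)
      moreover have "ispat (q - p)" unfolding ispat_def
      proof
        fix k
        show "uc k (q - p) = 0 \<or> uc k (q - p) = 1" using pr[of k] ck[of k] by auto
      qed
      moreover have "q - p \<noteq> 0" using pq by auto
      moreover have "mulA4 p (q - p) = 0" unfolding eq_uc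
      proof
        fix k
        show "uc k (mulA4 p (q - p)) = uc k 0" using pr[of k] ck[of k] by (auto simp: algebra_simps)
      qed
      ultimately show ?thesis using pq by (intro bexI[of _ p] bexI[of _ "q - p"]) auto
    next
      case False2: False
      have "p - r \<in> V" using V pq rV by (intro sub_diff)
      moreover have "ispat (p - r)" unfolding ispat_def
      proof
        fix k
        show "uc k (p - r) = 0 \<or> uc k (p - r) = 1" using pr[of k] pr(2)[of k] ucr[of k] by auto
      qed
      moreover have "p - r \<noteq> 0" using False2 by auto
      moreover have "mulA4 r (p - r) = 0" unfolding eq_uc
      proof
        fix k
        show "uc k (mulA4 r (p - r)) = uc k 0" using pr[of k] pr(2)[of k] ucr[of k] by auto
      qed
      ultimately show ?thesis using rV rp False by (intro bexI[of _ r] bexI[of _ "p - r"]) auto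
    qed
  qed
qed

lemma uc_minus[simp]: "uc k (- x) = - uc k x"
  by (cases x) (auto simp: uc_def algebra_simps)

definition U1 :: A4 where "U1 = (0, 1, 0)"
definition U2 :: A4 where "U2 = (1/2, -1/2, \<i>/2)"
definition U3 :: A4 where "U3 = (1/2, -1/2, -\<i>/2)"

lemma ucU[simp]:
  "uc 1 U1 = 1" "uc 2 U1 = 0" "uc 3 U1 = 0"
  "uc 1 U2 = 0" "uc 2 U2 = 1" "uc 3 U2 = 0"
  "uc 1 U3 = 0" "uc 2 U3 = 0" "uc 3 U3 = 1"
  by (simp_all add: uc_def U1_def U2_def U3_def field_simps)

lemma ucE[simp]:
  "uc 1 e1 = 1" "uc 2 e1 = 1" "uc 3 e1 = 1"
  "uc 1 e2 = 1" "uc 2 e2 = 0" "uc 3 e2 = 0"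
  "uc 1 e3 = 0" "uc 2 e3 = -\<i>" "uc 3 e3 = \<i>"
  by (simp_all add: uc_def e1_def e2_def e3_def)

lemmas ucU1[simp] = ucU[unfolded One_nat_def]
lemmas ucE1[simp] = ucE[unfolded One_nat_def]

lemma pat7:
  assumes "ispat p" "p \<noteq> 0"
  shows "p = U1 \<or> p = U2 \<or> p = U3 \<or> p = U1 + U2 \<or> p = U1 + U3 \<or> p = U2 + U3 \<or> p = U1 + U2 + U3"
proof -
  have h: "uc 1 p = 0 \<or> uc 1 p = 1" "uc 2 p = 0 \<or> uc 2 p = 1" "uc 3 p = 0 \<or> uc 3 p = 1"
    using assms(1) unfolding ispat_def by auto
  have n: "\<not> (uc 1 p = 0 \<and> uc 2 p = 0 \<and> uc 3 p = 0)" using assms(2) eq_uc[of p 0] by auto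
  show ?thesis using h n unfolding eq_uc[of p] by (elim disjE) simp_all
qed

lemma C3:
  assumes "ispat p" "p \<noteq> 0" "ispat q" "q \<noteq> 0" "mulA4 p q = 0"
  shows "(p = U1 \<and> q = U2 \<or> p = U2 \<and> q = U1) \<or> (p = U1 \<and> q = U3 \<or> p = U3 \<and> q = U1) \<or>
         (p = U2 \<and> q = U3 \<or> p = U3 \<and> q = U2) \<or> (p = U1 \<and> q = U2 + U3 \<or> p = U2 + U3 \<and> q = U1) \<or>
         (p = U2 \<and> q = U1 + U3 \<or> p = U1 + U3 \<and> q = U2) \<or> (p = U3 \<and> q = U1 + U2 \<or> p = U1 + U2 \<and> q = U3)"
proof -
  have h: "uc 1 p = 0 \<or> uc 1 p = 1" "uc 2 p = 0 \<or> uc 2 p = 1" "uc 3 p = 0 \<or> uc 3 p = 1"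
    "uc 1 q = 0 \<or> uc 1 q = 1" "uc 2 q = 0 \<or> uc 2 q = 1" "uc 3 q = 0 \<or> uc 3 q = 1"
    using assms(1,3) unfolding ispat_def by auto
  have n: "\<not> (uc 1 p = 0 \<and> uc 2 p = 0 \<and> uc 3 p = 0)" using assms(2) eq_uc[of p 0] by auto
  have n2: "\<not> (uc 1 q = 0 \<and> uc 2 q = 0 \<and> uc 3 q = 0)" using assms(4) eq_uc[of q 0] by auto
  have m: "uc 1 p * uc 1 q = 0" "uc 2 p * uc 2 q = 0" "uc 3 p * uc 3 q = 0"
    using assms(5) eq_uc[of "mulA4 p q" 0] by auto
  show ?thesis using h n n2 m unfolding eq_uc[of p] eq_uc[of q] by (elim disjE) simp_all
qed


lemma mul_sc_right: "mulA4 p (sc k q) = sc k (mulA4 p q)"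
  unfolding eq_uc by (simp add: algebra_simps)

lemma G:
  assumes p: "ispat p" "p \<noteq> 0" and q: "ispat q" "q \<noteq> 0" and pq: "mulA4 p q = 0"
  shows "subalgebraA4 (VS.span {p,q}) \<and> dimA4 (VS.span {p,q}) = 2"
proof -
  have pp: "mulA4 p p = p" and qq: "mulA4 q q = q" using pat_sq p q by auto
  have neq: "p \<noteq> q" using pp pq p(2) by auto
  have "p \<notin> VS.span {q}"
  proof
    assume "p \<in> VS.span {q}"
    then obtain k where "p = sc k q" unfolding VS.span_singleton by blast
    then have "mulA4 p p = sc k (mulA4 p q)" by (metis mul_sc_right)
    then show False using pp pq p(2) by (simp add: sc_def zero_prod_def)
  qed
  moreover have "VS.independent {q}" using q(2) by (simp add: VS.independent_insert)
  ultimately have ind: "VS.independent {p,q}" using neq by (simp add: VS.independent_insert)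
  have dim: "dimA4 (VS.span {p,q}) = 2"
    unfolding dimA4_def using VS.dim_span_eq_card_independent[OF ind] neq by simp
  have pr1: "uc k p = 0 \<or> uc k p = 1" for k using p(1) unfolding ispat_def by blast
  have pr2: "uc k q = 0 \<or> uc k q = 1" for k using q(1) unfolding ispat_def by blast
  have pr3: "uc k p * uc k q = 0" for k
  proof -
    have "uc k (mulA4 p q) = uc k 0" using pq by simp
    then show ?thesis by simp
  qed
  have "mulA4 x y \<in> VS.span {p,q}" if xs: "x \<in> VS.span {p,q}" and ys: "y \<in> VS.span {p,q}" for x y
  proof -
    obtain a b where x: "x = sc a p + sc b q" using xs[unfolded span2] by blast
    obtain c d where y: "y = sc c p + sc d q" using ys[unfolded span2] by blast
    have "mulA4 x y = sc (a*c) p + sc (b*d) q"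
      unfolding eq_uc
    proof
      fix k
      show "uc k (mulA4 x y) = uc k (sc (a * c) p + sc (b * d) q)"
        using pr1[of k] pr2[of k] pr3[of k] by (elim disjE) (simp_all add: x y algebra_simps)
    qed
    then show ?thesis unfolding span2 by blast
  qed
  then have "subalgebraA4 (VS.span {p,q})" unfolding subalgebraA4_def by simp
  with dim show ?thesis by simp
qed

lemma F:
  assumes V: "subalgebraA4 V" "dimA4 V = 2" and pqV: "p \<in> V" "q \<in> V"
    and p: "ispat p" "p \<noteq> 0" and q: "ispat q" "q \<noteq> 0" and pq: "mulA4 p q = 0"
  shows "V = VS.span {p,q}"
proof -
  have sV: "VS.subspace V" using V(1) unfolding subalgebraA4_def by simp
  have "VS.span {p,q} \<subseteq> V" using pqV sV by (intro VS.span_minimal) auto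
  moreover have "dimA4 (VS.span {p,q}) = 2" using G[OF p q pq] by simp
  ultimately have "VS.span {p,q} = V"
    using FD.subspace_dim_equal[of "VS.span {p,q}" V] sV V(2) unfolding dimA4_def by simp
  then show ?thesis by simp
qed

lemma mem2I: "x = sc \<alpha> a + sc \<beta> b \<Longrightarrow> x \<in> VS.span {a,b}"
  unfolding span2 by blast

lemma span_eq2:
  assumes "a \<in> VS.span {c,d}" "b \<in> VS.span {c,d}" "c \<in> VS.span {a,b}" "d \<in> VS.span {a,b}"
  shows "VS.span {a,b} = VS.span {c,d}"
  using assms by (intro equalityI VS.span_minimal) auto



lemma W1: "spanA4 {e1, e2} = VS.span {U1, U2 + U3}"
  unfolding spanA4_def
  apply (rule span_eq2)
  apply (rule mem2I[where \<alpha>=1 and \<beta>=1], simp add: eq_uc)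
  apply (rule mem2I[where \<alpha>=1 and \<beta>=0], simp add: eq_uc)
  apply (rule mem2I[where \<alpha>=0 and \<beta>=1], simp add: eq_uc)
  apply (rule mem2I[where \<alpha>=1 and \<beta>="-1"], simp add: eq_uc)
  done

lemma W2: "spanA4 {e1 + sc \<i> e3, e2} = VS.span {U1, U2}"
  unfolding spanA4_def
  apply (rule span_eq2)
  apply (rule mem2I[where \<alpha>=1 and \<beta>=2], simp add: eq_uc)
  apply (rule mem2I[where \<alpha>=1 and \<beta>=0], simp add: eq_uc)
  apply (rule mem2I[where \<alpha>=0 and \<beta>=1], simp add: eq_uc)
  apply (rule mem2I[where \<alpha>="1/2" and \<beta>="-1/2"], simp add: eq_uc)
  done

lemma W3: "spanA4 {e1 - sc \<i> e3, e2} = VS.span {U1, U3}"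
  unfolding spanA4_def
  apply (rule span_eq2)
  apply (rule mem2I[where \<alpha>=1 and \<beta>=2], simp add: eq_uc)
  apply (rule mem2I[where \<alpha>=1 and \<beta>=0], simp add: eq_uc)
  apply (rule mem2I[where \<alpha>=0 and \<beta>=1], simp add: eq_uc)
  apply (rule mem2I[where \<alpha>="1/2" and \<beta>="-1/2"], simp add: eq_uc)
  done

lemma W4: "spanA4 {e1 - e2, e3} = VS.span {U2, U3}"
  unfolding spanA4_def
  apply (rule span_eq2)
  apply (rule mem2I[where \<alpha>=1 and \<beta>=1], simp add: eq_uc)
  apply (rule mem2I[where \<alpha>="-\<i>" and \<beta>="\<i>"], simp add: eq_uc)
  apply (rule mem2I[where \<alpha>="1/2" and \<beta>="\<i>/2"], simp add: eq_uc field_simps)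
  apply (rule mem2I[where \<alpha>="1/2" and \<beta>="-\<i>/2"], simp add: eq_uc field_simps)
  done

lemma W5: "spanA4 {e1, sc \<i> e2 + e3} = VS.span {U2, U1 + U3}"
  unfolding spanA4_def
  apply (rule span_eq2)
  apply (rule mem2I[where \<alpha>=1 and \<beta>=1], simp add: eq_uc)
  apply (rule mem2I[where \<alpha>="-\<i>" and \<beta>="\<i>"], simp add: eq_uc)
  apply (rule mem2I[where \<alpha>="1/2" and \<beta>="\<i>/2"], simp add: eq_uc field_simps)
  apply (rule mem2I[where \<alpha>="1/2" and \<beta>="-\<i>/2"], simp add: eq_uc field_simps)
  done

lemma W6: "spanA4 {e1, - sc \<i> e2 + e3} = VS.span {U3, U1 + U2}"
  unfolding spanA4_def
  apply (rule span_eq2)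
  apply (rule mem2I[where \<alpha>=1 and \<beta>=1], simp add: eq_uc)
  apply (rule mem2I[where \<alpha>="\<i>" and \<beta>="-\<i>"], simp add: eq_uc)
  apply (rule mem2I[where \<alpha>="1/2" and \<beta>="-\<i>/2"], simp add: eq_uc field_simps)
  apply (rule mem2I[where \<alpha>="1/2" and \<beta>="\<i>/2"], simp add: eq_uc field_simps)
  done


lemma patU: "ispat U1" "ispat U2" "ispat U3" "ispat (U1 + U2)" "ispat (U1 + U3)" "ispat (U2 + U3)"
  by (simp_all add: ispat_def uc_def U1_def U2_def U3_def field_simps)

lemma nzU: "U1 \<noteq> 0" "U2 \<noteq> 0" "U3 \<noteq> 0" "U1 + U2 \<noteq> 0" "U1 + U3 \<noteq> 0" "U2 + U3 \<noteq> 0"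
  by (simp_all add: eq_uc)

lemma mulU: "mulA4 U1 U2 = 0" "mulA4 U1 U3 = 0" "mulA4 U2 U3 = 0"
  "mulA4 U1 (U2 + U3) = 0" "mulA4 U2 (U1 + U3) = 0" "mulA4 U3 (U1 + U2) = 0"
  by (simp_all add: eq_uc)

lemma GU:
  "subalgebraA4 (VS.span {U1, U2}) \<and> dimA4 (VS.span {U1, U2}) = 2"
  "subalgebraA4 (VS.span {U1, U3}) \<and> dimA4 (VS.span {U1, U3}) = 2"
  "subalgebraA4 (VS.span {U2, U3}) \<and> dimA4 (VS.span {U2, U3}) = 2"
  "subalgebraA4 (VS.span {U1, U2 + U3}) \<and> dimA4 (VS.span {U1, U2 + U3}) = 2"
  "subalgebraA4 (VS.span {U2, U1 + U3}) \<and> dimA4 (VS.span {U2, U1 + U3}) = 2"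
  "subalgebraA4 (VS.span {U3, U1 + U2}) \<and> dimA4 (VS.span {U3, U1 + U2}) = 2"
  by (rule G; simp add: patU nzU mulU)+

definition neg3 :: "A4 \<Rightarrow> A4" where "neg3 x = (fst x, fst (snd x), - snd (snd x))"

lemma neg3_mul: "neg3 (mulA4 x y) = mulA4 (neg3 x) (neg3 y)"
  by (cases x; cases y) (simp add: neg3_def mulA4_def)

lemma neg3_U: "neg3 U1 = U1" "neg3 U2 = U3" "neg3 U3 = U2"
  by (simp_all add: neg3_def U1_def U2_def U3_def)

lemma neg3_add: "neg3 (x + y) = neg3 x + neg3 y"
  by (cases x; cases y) (simp add: neg3_def)

lemma neg3_sc: "neg3 (sc c x) = sc c (neg3 x)"
  by (cases x) (simp add: neg3_def sc_def)

lemma mh_neg3: "module_hom sc sc neg3"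
  unfolding module_hom_def module_hom_axioms_def module_iff_vector_space
  using vs neg3_add neg3_sc by blast

lemma mh_id: "module_hom sc sc id"
  unfolding module_hom_def module_hom_axioms_def module_iff_vector_space
  using vs by simp

lemma aut_neg3: "automorphismA4 neg3"
  unfolding automorphismA4_def
  using mh_neg3 module_hom_iff_linear neg3_mul
  by (auto intro: involuntory_imp_bij simp: neg3_def)

lemma aut_id: "automorphismA4 id"
  unfolding automorphismA4_def
  using mh_id module_hom_iff_linear by auto

lemma img_neg3: "neg3 ` VS.span S = VS.span (neg3 ` S)"
  using module_hom.span_image[OF mh_neg3] by simp

lemma part1: "(subalgebraA4 V \<and> dimA4 V = 2) \<longleftrightarrow>
            V \<in> {spanA4 {e1, e2},
                 spanA4 {e1 + sc \<i> e3, e2},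
                 spanA4 {e1 - sc \<i> e3, e2},
                 spanA4 {e1 - e2, e3},
                 spanA4 {e1, sc \<i> e2 + e3},
                 spanA4 {e1, - sc \<i> e2 + e3}}"
  unfolding W1 W2 W3 W4 W5 W6
proof
  assume h: "subalgebraA4 V \<and> dimA4 V = 2"
  obtain p q where pq: "p\<in>V" "q\<in>V" "ispat p" "ispat q" "p \<noteq> 0" "q \<noteq> 0" "p \<noteq> q"
    using C1 h by blast
  obtain p' q' where pq': "p'\<in>V" "q'\<in>V" "ispat p'" "ispat q'" "p' \<noteq> 0" "q' \<noteq> 0" "mulA4 p' q' = 0"
    using C2[OF _ pq] h by blast
  have V: "V = VS.span {p', q'}" using F[OF _ _ pq'(1,2,3,5,4,6,7)] h by blast
  have "VS.span {p', q'} = VS.span {U1, U2 + U3} \<or> VS.span {p', q'} = VS.span {U1, U2} \<or>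
        VS.span {p', q'} = VS.span {U1, U3} \<or> VS.span {p', q'} = VS.span {U2, U3} \<or>
        VS.span {p', q'} = VS.span {U2, U1 + U3} \<or> VS.span {p', q'} = VS.span {U3, U1 + U2}"
    using C3[OF pq'(3,5,4,6,7)] by (elim disjE) (simp_all add: insert_commute)
  then show "V \<in> {VS.span {U1, U2 + U3}, VS.span {U1, U2}, VS.span {U1, U3},
           VS.span {U2, U3}, VS.span {U2, U1 + U3}, VS.span {U3, U1 + U2}}" using V by auto
next
  assume "V \<in> {VS.span {U1, U2 + U3}, VS.span {U1, U2}, VS.span {U1, U3},
           VS.span {U2, U3}, VS.span {U2, U1 + U3}, VS.span {U3, U1 + U2}}"
  then show "subalgebraA4 V \<and> dimA4 V = 2" using GU by auto
qed

theorem mainTheorem11: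
  shows "(\<forall>V. (subalgebraA4 V \<and> dimA4 V = 2) \<longleftrightarrow>
            V \<in> {spanA4 {e1, e2},
                 spanA4 {e1 + sc \<i> e3, e2},
                 spanA4 {e1 - sc \<i> e3, e2},
                 spanA4 {e1 - e2, e3},
                 spanA4 {e1, sc \<i> e2 + e3},
                 spanA4 {e1, - sc \<i> e2 + e3}})
       \<and> (\<forall>V. subalgebraA4 V \<and> dimA4 V = 2 \<longrightarrow>
            (\<exists>f W. automorphismA4 f \<and> f ` V = W \<and>
               W \<in> {spanA4 {e1, e2},
                    spanA4 {e1 + sc \<i> e3, e2},
                    spanA4 {e1 - e2, e3},
                    spanA4 {e1, sc \<i> e2 + e3}}))"
proof (intro conjI allI impI)
  fix V show "(subalgebraA4 V \<and> dimA4 V = 2) \<longleftrightarrow>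
            V \<in> {spanA4 {e1, e2},
                 spanA4 {e1 + sc \<i> e3, e2},
                 spanA4 {e1 - sc \<i> e3, e2},
                 spanA4 {e1 - e2, e3},
                 spanA4 {e1, sc \<i> e2 + e3},
                 spanA4 {e1, - sc \<i> e2 + e3}}" by (rule part1)
next
  fix V assume "subalgebraA4 V \<and> dimA4 V = 2"
  then have "V \<in> {VS.span {U1, U2 + U3}, VS.span {U1, U2}, VS.span {U1, U3},
           VS.span {U2, U3}, VS.span {U2, U1 + U3}, VS.span {U3, U1 + U2}}"
    by (rule iffD1[OF part1[of V, unfolded W1 W2 W3 W4 W5 W6]])
  then consider (a) "V = VS.span {U1, U2 + U3}" | (b) "V = VS.span {U1, U2}" | (c) "V = VS.span {U1, U3}"
    | (d) "V = VS.span {U2, U3}" | (e) "V = VS.span {U2, U1 + U3}" | (f) "V = VS.span {U3, U1 + U2}"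
    by blast
  then show "\<exists>f W. automorphismA4 f \<and> f ` V = W \<and>
               W \<in> {spanA4 {e1, e2},
                    spanA4 {e1 + sc \<i> e3, e2},
                    spanA4 {e1 - e2, e3},
                    spanA4 {e1, sc \<i> e2 + e3}}"
  proof cases
    case c
    have "neg3 ` V = VS.span {U1, U2}" by (simp add: c img_neg3 neg3_U)
    then show ?thesis using aut_neg3 by (intro exI[of _ neg3] exI[of _ "VS.span {U1, U2}"]) (simp add: W1 W2 W4 W5)
  next
    case f
    have "neg3 ` V = VS.span {U2, U1 + U3}" by (simp add: f img_neg3 neg3_U neg3_add)
    then show ?thesis using aut_neg3 by (intro exI[of _ neg3] exI[of _ "VS.span {U2, U1 + U3}"]) (simp add: W1 W2 W4 W5)
  next
    case a then show ?thesis using aut_id by (intro exI[of _ id] exI[of _ V]) (simp add: W1 W2 W4 W5)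
  next
    case b then show ?thesis using aut_id by (intro exI[of _ id] exI[of _ V]) (simp add: W1 W2 W4 W5)
  next
    case d then show ?thesis using aut_id by (intro exI[of _ id] exI[of _ V]) (simp add: W1 W2 W4 W5)
  next
    case e then show ?thesis using aut_id by (intro exI[of _ id] exI[of _ V]) (simp add: W1 W2 W4 W5)
  qed
qed

end
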